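(* Let $c=\Big(8\sum_{j=1}^\infty\log^2(1+1/j)\Big)^{1/2}$. For every positive integer $t$ and all positive integers $a_1,\dots,a_t$, \[ \sum_{i=1}^t\log(a_i+1)\le\frac{c}{2}\Bigg(\sum_{i=1}^t i\,a_i\Bigg)^{1/2}. \] Moreover the constant $c/2$ is best possible: for every $c'<c/2$ there exist $t\ge1$ and positive integers $a_1,\dots,a_t$ with $\sum_{i=1}^t\log(a_i+1)>c'\big(\sum_{i=1}^t i a_i\big)^{1/2}$. *)

theory Defs
  imports Complex_Main
begin

definition c_const :: real where
  "c_const = sqrt (8 * (\<Sum>j. (ln (1 + 1 / real (Suc j)))\<^sup>2))"

end

theory Submission imports Defs "HOL-Analysis.Analysis" begin
definition w :: "nat \<Rightarrow> real" where "w j = ln (1 + 1 / real (Suc j))"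

lemma w_pos: "w j > 0" unfolding w_def by (intro ln_gt_zero) simp

lemma w_mono: "i \<le> j \<Longrightarrow> w j \<le> w i"
  unfolding w_def by (subst ln_le_cancel_iff) (auto simp: frac_le add_pos_pos)

lemma ln_sum: "ln (real a + 1) = (\<Sum>j<a. w j)"
proof (induction a)
  case 0 then show ?case by simp
next
  case (Suc a)
  have e: "(real a + 1) * (1 + 1 / real (Suc a)) = real (Suc a) + 1"
    by (simp add: field_simps)
  have "ln (real (Suc a) + 1) = ln ((real a + 1) * (1 + 1 / real (Suc a)))"
    by (simp only: e)
  also have "\<dots> = ln (real a + 1) + w a"
  proof -
    have p: "0 < 1 + 1 / real (Suc a)" by (smt (verit) of_nat_0_le_iff divide_nonneg_nonneg)
    show ?thesis unfolding w_def using p by (simp add: ln_mult)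
  qed
  finally show ?case using Suc by simp
qed

lemma summ: "summable (\<lambda>j. (w j)\<^sup>2)"
proof (rule summable_comparison_test)
  have "summable (\<lambda>n. inverse ((real_of_nat (Suc n))\<^sup>2))"
    using inverse_power_summable[of 2] by (subst summable_Suc_iff) simp
  then show "summable (\<lambda>n. inverse ((real_of_nat (Suc n))\<^sup>2))" .
  show "\<exists>N. \<forall>n\<ge>N. norm ((w n)\<^sup>2) \<le> inverse ((real (Suc n))\<^sup>2)"
  proof (intro exI allI impI)
    fix n :: nat
    have "w n \<le> 1 / real (Suc n)" unfolding w_def by (rule ln_add_one_self_le_self) simp
    then have "(w n)\<^sup>2 \<le> (1 / real (Suc n))\<^sup>2" using w_pos[of n]
      by (intro power_mono) auto
    then show "norm ((w n)\<^sup>2) \<le> inverse ((real (Suc n))\<^sup>2)"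
      by (simp add: power_divide inverse_eq_divide)
  qed
qed

definition S :: real where "S = (\<Sum>j. (w j)\<^sup>2)"

lemma c_half: "c_const / 2 = sqrt (2 * S)"
proof -
  have "c_const = sqrt (4 * (2 * S))" unfolding c_const_def S_def w_def by simp
  also have "\<dots> = sqrt 4 * sqrt (2 * S)" by (rule real_sqrt_mult)
  also have "sqrt 4 = (2::real)" by (rule real_sqrt_unique) auto
  finally show ?thesis by simp
qed

lemma partial_le_S: "(\<Sum>j<M. (w j)\<^sup>2) \<le> S"
  unfolding S_def by (rule sum_le_suminf[OF summ]) auto

lemma S_pos: "S > 0"
proof -
  have "(\<Sum>j<1. (w j)\<^sup>2) > 0" using w_pos[of 0] by simp
  then show ?thesis using partial_le_S[of 1] by linarith
qed

definition cnt :: "(nat \<Rightarrow> nat) \<Rightarrow> nat \<Rightarrow> nat \<Rightarrow> real" where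
  "cnt a t j = (\<Sum>i=1..t. if j < a i then 1 else 0)"

lemma cnt_le: "cnt a t j \<le> real t"
proof -
  have "cnt a t j \<le> (\<Sum>i=1..t. 1)" unfolding cnt_def by (intro sum_mono) auto
  then show ?thesis by simp
qed

lemma sq_bound:
  assumes "\<forall>i\<in>{1..t}. a i \<le> M"
  shows "(\<Sum>j<M. (cnt a t j)\<^sup>2) \<le> 2 * (\<Sum>i=1..t. real i * real (a i))"
  using assms
proof (induction t)
  case 0 then show ?case by (simp add: cnt_def)
next
  case (Suc t)
  have IH: "(\<Sum>j<M. (cnt a t j)\<^sup>2) \<le> 2 * (\<Sum>i=1..t. real i * real (a i))"
    using Suc by auto
  have aM: "a (Suc t) \<le> M" using Suc.prems by auto
  let ?e = "\<lambda>j. if j < a (Suc t) then (1::real) else 0"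
  have c: "cnt a (Suc t) j = cnt a t j + ?e j" for j
    unfolding cnt_def by simp
  have "(\<Sum>j<M. (cnt a (Suc t) j)\<^sup>2) = (\<Sum>j<M. (cnt a t j)\<^sup>2) + 2 * (\<Sum>j<M. cnt a t j * ?e j) + (\<Sum>j<M. (?e j)\<^sup>2)"
    unfolding c by (simp add: power2_sum sum.distrib sum_distrib_left algebra_simps)
  also have "(\<Sum>j<M. (?e j)\<^sup>2) = (\<Sum>j<M. ?e j)" by (intro sum.cong) auto
  also have "(\<Sum>j<M. ?e j) = real (a (Suc t))"
  proof -
    have "(\<Sum>j<M. ?e j) = (\<Sum>j\<in>{j\<in>{..<M}. j < a (Suc t)}. 1)"
      by (rule sum.inter_filter[symmetric]) simp
    also have "{j\<in>{..<M}. j < a (Suc t)} = {..<a (Suc t)}" using aM by auto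
    finally show ?thesis by simp
  qed
  also have "(\<Sum>j<M. cnt a t j * ?e j) \<le> (\<Sum>j<M. real t * ?e j)"
    by (intro sum_mono) (simp add: cnt_le)
  also have "(\<Sum>j<M. real t * ?e j) = real t * real (a (Suc t))"
    by (simp add: sum_distrib_left[symmetric] \<open>(\<Sum>j<M. ?e j) = real (a (Suc t))\<close>)
  finally have "(\<Sum>j<M. (cnt a (Suc t) j)\<^sup>2) \<le> (\<Sum>j<M. (cnt a t j)\<^sup>2) + (2 * real t + 1) * real (a (Suc t))"
    by (simp add: algebra_simps)
  also have "\<dots> \<le> 2 * (\<Sum>i=1..t. real i * real (a i)) + 2 * real (Suc t) * real (a (Suc t))"
  proof -
    have "(2*real t + 1)*real (a (Suc t)) \<le> 2 * real (Suc t) * real (a (Suc t))"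
      by (intro mult_right_mono) auto
    then show ?thesis using IH by linarith
  qed
  also have "\<dots> = 2 * (\<Sum>i=1..Suc t. real i * real (a i))" by (simp add: algebra_simps)
  finally show ?case .
qed

lemma L_eq:
  assumes "\<forall>i\<in>{1..t}. a i \<le> M"
  shows "(\<Sum>i=1..t. ln (real (a i) + 1)) = (\<Sum>j<M. w j * cnt a t j)"
proof -
  have "ln (real (a i) + 1) = (\<Sum>j<M. w j * (if j < a i then 1 else 0))" if "i \<in> {1..t}" for i
  proof -
    have "(\<Sum>j<M. w j * (if j < a i then 1 else 0)) = (\<Sum>j<M. if j < a i then w j else 0)"
      by (intro sum.cong) auto
    also have "\<dots> = (\<Sum>j\<in>{j\<in>{..<M}. j < a i}. w j)"
      by (rule sum.inter_filter[symmetric]) simp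
    also have "{j\<in>{..<M}. j < a i} = {..<a i}" using bspec[OF assms that] by auto
    finally show ?thesis by (simp add: ln_sum)
  qed
  then have "(\<Sum>i=1..t. ln (real (a i) + 1)) = (\<Sum>i=1..t. \<Sum>j<M. w j * (if j < a i then 1 else 0))"
    by (intro sum.cong) auto
  also have "\<dots> = (\<Sum>j<M. w j * cnt a t j)"
    unfolding cnt_def by (subst sum.swap) (simp add: sum_distrib_left)
  finally show ?thesis .
qed

lemma part1:
  shows "(\<Sum>i=1..t. ln (real (a i) + 1)) \<le> c_const / 2 * sqrt (\<Sum>i=1..t. real i * real (a i))"
proof -
  define M where "M = Max (a ` {1..t})"
  have aM: "\<forall>i\<in>{1..t}. a i \<le> M" unfolding M_def by auto
  define L where "L = (\<Sum>i=1..t. ln (real (a i) + 1))"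
  define T where "T = (\<Sum>i=1..t. real i * real (a i))"
  have L0: "L \<ge> 0" unfolding L_def by (intro sum_nonneg) auto
  have "L\<^sup>2 = (\<Sum>j<M. w j * cnt a t j)\<^sup>2" unfolding L_def using L_eq[OF aM] by simp
  also have "\<dots> \<le> (\<Sum>j<M. (w j)\<^sup>2) * (\<Sum>j<M. (cnt a t j)\<^sup>2)"
    by (rule Cauchy_Schwarz_ineq_sum)
  also have "\<dots> \<le> S * (2 * T)"
    unfolding T_def by (intro mult_mono partial_le_S sq_bound[OF aM]) (auto intro: sum_nonneg less_imp_le[OF S_pos])
  finally have "L \<le> sqrt (S * (2 * T))" using L0 real_le_rsqrt by blast
  also have "\<dots> = sqrt (2 * S) * sqrt T" by (simp add: real_sqrt_mult[symmetric] algebra_simps)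
  finally show ?thesis unfolding L_def T_def c_half .
qed

lemma downclosed:
  fixes D :: "nat set"
  assumes "finite D" "\<And>x y. x \<in> D \<Longrightarrow> y \<le> x \<Longrightarrow> y \<in> D"
  shows "D = {..<card D}"
proof -
  have "D \<subseteq> {..<card D}"
  proof
    fix x assume x: "x \<in> D"
    have "{..x} \<subseteq> D" using assms(2)[OF x] by auto
    then have "card {..x} \<le> card D" using assms(1) by (rule card_mono[rotated])
    then show "x \<in> {..<card D}" by simp
  qed
  then show ?thesis by (intro card_subset_eq) auto
qed

lemma gauss: "2 * (\<Sum>i=1..n. real i) = real n * (real n + 1)"
  by (induction n) (auto simp: algebra_simps)

lemma card_real: "finite A \<Longrightarrow> real (card {x\<in>A. P x}) = (\<Sum>x\<in>A. if P x then 1 else 0)"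
  by (simp add: sum.inter_filter[symmetric])

lemma part2:
  fixes c' :: real
  assumes "c' < c_const / 2"
  shows "\<exists>(t::nat) (a::nat \<Rightarrow> nat). t \<ge> 1 \<and> (\<forall>i\<in>{1..t}. a i \<ge> 1) \<and>
               (\<Sum>i=1..t. ln (real (a i) + 1)) > c' * sqrt (\<Sum>i=1..t. real i * real (a i))"
proof (cases "c' \<le> 0")
  case True
  have "c' * sqrt (\<Sum>i::nat=1..1. real i * real ((\<lambda>_. 1::nat) i)) \<le> 0" using True by simp
  also have "0 < (\<Sum>i::nat=1..1. ln (real ((\<lambda>_. 1::nat) i) + 1))" using ln_gt_zero[of "2::real"] by simp
  finally have "c' * sqrt (\<Sum>i::nat=1..1. real i * real ((\<lambda>_. 1::nat) i)) < (\<Sum>i::nat=1..1. ln (real ((\<lambda>_. 1::nat) i) + 1))" .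
  then show ?thesis by (intro exI[of _ "1::nat"] exI[of _ "\<lambda>_. 1::nat"]) simp
next
  case False
  then have c0: "c' > 0" by simp
  have "c'\<^sup>2 < (sqrt (2 * S))\<^sup>2" using assms c0 c_half by (intro power_strict_mono) auto
  then have cS: "c'\<^sup>2 / 2 < S" using S_pos by simp
  have "(\<lambda>n. \<Sum>j<n. (w j)\<^sup>2) \<longlonglongrightarrow> S" unfolding S_def by (rule summable_LIMSEQ[OF summ])
  from order_tendstoD(1)[OF this cS] obtain N where "\<forall>n\<ge>N. (\<Sum>j<n. (w j)\<^sup>2) > c'\<^sup>2 / 2"
    unfolding eventually_sequentially by blast
  then obtain J where JA: "(\<Sum>j<J. (w j)\<^sup>2) > c'\<^sup>2 / 2" by blast
  define A where "A = (\<Sum>j<J. (w j)\<^sup>2)"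
  define B where "B = (\<Sum>j<J. w j)"
  have "c'\<^sup>2 / 2 > 0" using c0 by simp
  then have A0: "A > 0" using JA unfolding A_def by linarith
  have J0: "J > 0" using A0 unfolding A_def by (cases J) auto
  have B0: "B \<ge> 0" unfolding B_def using w_pos by (intro sum_nonneg) (auto intro: less_imp_le)
  define \<delta> where "\<delta> = A\<^sup>2 - c'\<^sup>2 * A / 2"
  have d0: "\<delta> > 0" unfolding \<delta>_def using A0 JA unfolding A_def[symmetric]
    by (simp add: power2_eq_square)
  define K where "K = (2*A*B + c'\<^sup>2*B/2)/\<delta> + B/A + 1 / w 0"
  have t1: "(2*A*B + c'\<^sup>2*B/2)/\<delta> \<ge> 0" using A0 B0 d0 by auto
  have t2: "B/A \<ge> 0" using A0 B0 by auto
  have t3: "1 / w 0 > 0" using w_pos by simp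
  have K0: "K > 0" unfolding K_def using t1 t2 t3 by linarith
  have Kw0: "K * w 0 \<ge> 1"
  proof -
    have "K \<ge> 1 / w 0" unfolding K_def using t1 t2 by linarith
    then have "K * w 0 \<ge> 1 / w 0 * w 0" using w_pos[of 0] by (intro mult_right_mono) auto
    then show ?thesis using w_pos[of 0] by simp
  qed
  have Kd: "K * \<delta> > 2*A*B + c'\<^sup>2*B/2"
  proof -
    have "K > (2*A*B + c'\<^sup>2*B/2)/\<delta>" unfolding K_def using t2 t3 by linarith
    then show ?thesis using d0 by (simp add: field_simps)
  qed
  have KA: "K * A \<ge> B"
  proof -
    have "K \<ge> B/A" unfolding K_def using t1 t3 by linarith
    then show ?thesis using A0 by (simp add: field_simps)
  qed
  define n where "n j = nat \<lfloor>K * w j\<rfloor>" for j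
  define t where "t = n 0"
  define a where "a i = card {j\<in>{..<J}. real i \<le> K * w j}" for i
  have Kw_nonneg: "K * w j \<ge> 0" for j using K0 w_pos[of j] by simp
  have n_iff: "i \<le> n j \<longleftrightarrow> real i \<le> K * w j" for i j
    unfolding n_def using Kw_nonneg[of j] by (simp add: le_nat_iff le_floor_iff)
  have n_le: "n j \<le> t" for j
  proof -
    have "K * w j \<le> K * w 0" using w_mono[of 0 j] K0 by (intro mult_left_mono) auto
    then show ?thesis unfolding t_def using n_iff[of "n j" j] n_iff[of "n j" 0] by simp
  qed
  have n_up: "real (n j) \<le> K * w j" for j using n_iff[of "n j" j] by simp
  have n_lo: "real (n j) \<ge> K * w j - 1" for j
    unfolding n_def using Kw_nonneg[of j] by (simp add: of_nat_nat)
  have t_ge: "t \<ge> 1" unfolding t_def using n_iff[of 1 0] Kw0 by simp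
  have a_ge: "\<forall>i\<in>{1..t}. a i \<ge> 1"
  proof
    fix i assume i: "i \<in> {1..t}"
    have "0 \<in> {j\<in>{..<J}. real i \<le> K * w j}" using J0 i n_iff[of i 0] unfolding t_def by auto
    then have "{j\<in>{..<J}. real i \<le> K * w j} \<noteq> {}" by blast
    then show "a i \<ge> 1" unfolding a_def by (simp add: Suc_le_eq card_gt_0_iff)
  qed
  have set_i: "{j\<in>{..<J}. real i \<le> K * w j} = {..<a i}" for i
    unfolding a_def
  proof (rule downclosed)
    fix x y assume "x \<in> {j\<in>{..<J}. real i \<le> K * w j}" "y \<le> x"
    then show "y \<in> {j\<in>{..<J}. real i \<le> K * w j}"
      using w_mono[of y x] K0 by (smt (verit) mem_Collect_eq lessThan_iff mult_left_mono order_le_less_trans)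
  qed simp
  have set_j: "{i\<in>{1..t}. real i \<le> K * w j} = {1..n j}" for j
    using n_le[of j] by (auto simp: n_iff[symmetric])
  define L where "L = (\<Sum>i=1..t. ln (real (a i) + 1))"
  define T where "T = (\<Sum>i=1..t. real i * real (a i))"
  have "L = (\<Sum>i=1..t. \<Sum>j<J. if real i \<le> K * w j then w j else 0)"
    unfolding L_def
  proof (intro sum.cong refl)
    fix i
    have "ln (real (a i) + 1) = (\<Sum>j\<in>{j\<in>{..<J}. real i \<le> K * w j}. w j)"
      unfolding set_i by (rule ln_sum)
    also have "\<dots> = (\<Sum>j<J. if real i \<le> K * w j then w j else 0)"
      by (rule sum.inter_filter) simp
    finally show "ln (real (a i) + 1) = (\<Sum>j<J. if real i \<le> K * w j then w j else 0)" .
  qed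
  also have "\<dots> = (\<Sum>j<J. w j * (\<Sum>i=1..t. if real i \<le> K * w j then 1 else 0))"
    by (subst sum.swap) (simp add: sum_distrib_left if_distrib cong: if_cong)
  also have "\<dots> = (\<Sum>j<J. w j * real (n j))"
  proof (intro sum.cong refl)
    fix j
    have "(\<Sum>i=1..t. if real i \<le> K * w j then 1 else 0) = real (card {i\<in>{1..t}. real i \<le> K * w j})"
      by (rule card_real[symmetric]) simp
    then show "w j * (\<Sum>i=1..t. if real i \<le> K * w j then 1 else 0) = w j * real (n j)"
      unfolding set_j by simp
  qed
  finally have Leq: "L = (\<Sum>j<J. w j * real (n j))" .
  have "L \<ge> (\<Sum>j<J. w j * (K * w j - 1))"
    unfolding Leq using w_pos by (intro sum_mono mult_left_mono n_lo) (auto intro: less_imp_le)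
  also have "(\<Sum>j<J. w j * (K * w j - 1)) = K * A - B"
    unfolding A_def B_def by (simp add: sum_distrib_left sum_subtractf power2_eq_square algebra_simps)
  finally have Llo: "L \<ge> K * A - B" .
  have "T = (\<Sum>i=1..t. \<Sum>j<J. if real i \<le> K * w j then real i else 0)"
    unfolding T_def a_def
  proof (intro sum.cong refl)
    fix i
    have "real (card {j\<in>{..<J}. real i \<le> K * w j}) = (\<Sum>j<J. if real i \<le> K * w j then 1 else 0)"
      by (rule card_real) simp
    then show "real i * real (card {j\<in>{..<J}. real i \<le> K * w j}) = (\<Sum>j<J. if real i \<le> K * w j then real i else 0)"
      by (simp add: sum_distrib_left if_distrib cong: if_cong)
  qed
  also have "\<dots> = (\<Sum>j<J. \<Sum>i=1..t. if real i \<le> K * w j then real i else 0)"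
    by (rule sum.swap)
  also have "\<dots> = (\<Sum>j<J. \<Sum>i=1..n j. real i)"
  proof (rule sum.cong[OF refl])
    fix j
    have "(\<Sum>i=1..t. if real i \<le> K * w j then real i else 0) = (\<Sum>i\<in>{i\<in>{1..t}. real i \<le> K * w j}. real i)"
      by (rule sum.inter_filter[symmetric]) simp
    then show "(\<Sum>i=1..t. if real i \<le> K * w j then real i else 0) = (\<Sum>i=1..n j. real i)"
      by (simp only: set_j)
  qed
  also have "\<dots> = (\<Sum>j<J. real (n j) * (real (n j) + 1) / 2)"
    using gauss by (intro sum.cong refl) (metis nonzero_mult_div_cancel_left zero_neq_numeral)
  also have "\<dots> \<le> (\<Sum>j<J. (K * w j) * (K * w j + 1) / 2)"
    by (intro sum_mono divide_right_mono mult_mono n_up add_right_mono) (auto simp: Kw_nonneg)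
  also have "\<dots> = K\<^sup>2 * A / 2 + K * B / 2"
  proof -
    have "(\<Sum>j<J. (K * w j) * (K * w j + 1) / 2) = (\<Sum>j<J. K\<^sup>2 / 2 * (w j)\<^sup>2 + K / 2 * w j)"
      by (intro sum.cong refl) (simp add: power2_eq_square algebra_simps add_divide_distrib)
    also have "\<dots> = K\<^sup>2 / 2 * A + K / 2 * B"
      unfolding A_def B_def by (simp add: sum.distrib sum_distrib_left)
    finally show ?thesis by simp
  qed
  finally have Tup: "T \<le> K\<^sup>2 * A / 2 + K * B / 2" .
  have T0: "T \<ge> 0" unfolding T_def by (intro sum_nonneg) auto
  have key: "(K * A - B)\<^sup>2 > c'\<^sup>2 * (K\<^sup>2 * A / 2 + K * B / 2)"
  proof -
    have "(K * A - B)\<^sup>2 - c'\<^sup>2 * (K\<^sup>2 * A / 2 + K * B / 2)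
          = K * (K * \<delta> - 2*A*B - c'\<^sup>2*B/2) + B\<^sup>2"
      unfolding \<delta>_def by (simp add: power2_eq_square algebra_simps)
    moreover have "K * (K * \<delta> - 2*A*B - c'\<^sup>2*B/2) > 0" using K0 Kd by simp
    ultimately show ?thesis by (smt (verit) zero_le_power2)
  qed
  have "(c' * sqrt T)\<^sup>2 = c'\<^sup>2 * T" using T0 by (simp add: power_mult_distrib)
  also have "\<dots> \<le> c'\<^sup>2 * (K\<^sup>2 * A / 2 + K * B / 2)" using Tup by (intro mult_left_mono) auto
  also have "\<dots> < (K * A - B)\<^sup>2" by (rule key)
  also have "\<dots> \<le> L\<^sup>2" using KA Llo by (intro power_mono) auto
  finally have "(c' * sqrt T)\<^sup>2 < L\<^sup>2" .
  moreover have L0: "L \<ge> 0" using KA Llo by linarith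
  ultimately have "c' * sqrt T < L" by (rule power_less_imp_less_base)
  then show ?thesis using t_ge a_ge unfolding L_def T_def by blast
qed

theorem lemma3p3:
  shows "(\<forall>(t::nat) (a::nat \<Rightarrow> nat). t \<ge> 1 \<longrightarrow> (\<forall>i\<in>{1..t}. a i \<ge> 1) \<longrightarrow>
            (\<Sum>i=1..t. ln (real (a i) + 1)) \<le> c_const / 2 * sqrt (\<Sum>i=1..t. real i * real (a i)))
       \<and> (\<forall>c'::real. c' < c_const / 2 \<longrightarrow>
            (\<exists>(t::nat) (a::nat \<Rightarrow> nat). t \<ge> 1 \<and> (\<forall>i\<in>{1..t}. a i \<ge> 1) \<and>
               (\<Sum>i=1..t. ln (real (a i) + 1)) > c' * sqrt (\<Sum>i=1..t. real i * real (a i))))"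
  using part1 part2 by blast

end
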